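(* Let $W\in\mathbb{C}[x_1,\dots,x_n]$ be a non-degenerate quasi-homogeneous polynomial with weights $q_i:=\mathrm{wt}(x_i)<1$ for $i=1,\dots,n$. Then there is a constant $C$ depending only on $W$ such that for every $(u_1,\dots,u_n)\in\mathbb{C}^n$ and every $i$, $$|u_i|\le C\Big(\sum_{j=1}^n\Big|\frac{\partial W}{\partial x_j}(u_1,\dots,u_n)\Big|+1\Big)^{\delta_i},\qquad \delta_i=\frac{q_i}{\min_j(1-q_j)}.$$ Moreover, if $q_i\le1/2$ for all $i$ then $\delta_i\le1$ for all $i$, and if $q_i<1/2$ for all $i$ then $\delta_i<1$ for all $i$.
   Context: $W$ is quasi-homogeneous if there are positive integers $d,k_1,\dots,k_n$ with $W(\lambda^{k_1}x_1,\dots,\lambda^{k_n}x_n)=\lambda^dW(x_1,\dots,x_n)$ for all $\lambda\in\mathbb{C}^*$ (taken least); the weight of $x_i$ is $q_i=k_i/d$. $W$ is non-degenerate if the weights $q_i$ are uniquely determined by $W$ and the affine hypersurface $W=0$ has an isolated singularity at the origin (equivalently, the only common zero of all $\partial W/\partial x_j$ is $0$). *)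

theory Defs
  imports Complex_Main
begin

text \<open>Polynomials in n variables x_0,...,x_{n-1} over the complex numbers are represented
by their coefficient functions: W alpha is the coefficient of the monomial
prod_{i<n} x_i^(alpha i).\<close>

definition is_mpoly :: "nat \<Rightarrow> ((nat \<Rightarrow> nat) \<Rightarrow> complex) \<Rightarrow> bool" where
  "is_mpoly n W \<longleftrightarrow> finite {\<alpha>. W \<alpha> \<noteq> 0} \<and> (\<forall>\<alpha>. W \<alpha> \<noteq> 0 \<longrightarrow> (\<forall>i\<ge>n. \<alpha> i = 0))"

definition mpoly_eval :: "nat \<Rightarrow> ((nat \<Rightarrow> nat) \<Rightarrow> complex) \<Rightarrow> (nat \<Rightarrow> complex) \<Rightarrow> complex" where
  "mpoly_eval n W u = (\<Sum>\<alpha>\<in>{\<alpha>. W \<alpha> \<noteq> 0}. W \<alpha> * (\<Prod>i<n. u i ^ \<alpha> i))"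

definition mpoly_pderiv :: "nat \<Rightarrow> ((nat \<Rightarrow> nat) \<Rightarrow> complex) \<Rightarrow> ((nat \<Rightarrow> nat) \<Rightarrow> complex)" where
  "mpoly_pderiv j W = (\<lambda>\<alpha>. of_nat (\<alpha> j + 1) * W (\<alpha>(j := \<alpha> j + 1)))"

definition qh_weights :: "nat \<Rightarrow> ((nat \<Rightarrow> nat) \<Rightarrow> complex) \<Rightarrow> (nat \<Rightarrow> real) \<Rightarrow> bool" where
  "qh_weights n W q \<longleftrightarrow>
     (\<exists>(d::nat) (k::nat \<Rightarrow> nat). d > 0 \<and> (\<forall>i<n. k i > 0) \<and>
        (\<forall>i<n. q i = real (k i) / real d) \<and>
        (\<forall>(t::complex) x. t \<noteq> 0 \<longrightarrow>
            mpoly_eval n W (\<lambda>i. t ^ k i * x i) = t ^ d * mpoly_eval n W x))"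

definition nondegenerate :: "nat \<Rightarrow> ((nat \<Rightarrow> nat) \<Rightarrow> complex) \<Rightarrow> bool" where
  "nondegenerate n W \<longleftrightarrow>
     (\<forall>q q'. qh_weights n W q \<and> qh_weights n W q' \<longrightarrow> (\<forall>i<n. q i = q' i)) \<and>
     (\<forall>u. (\<forall>j<n. mpoly_eval n (mpoly_pderiv j W) u = 0) \<longrightarrow> (\<forall>i<n. u i = 0))"

end

theory Submission
  imports Defs "HOL-Analysis.Analysis"
begin

lemma eval_local:
  assumes "\<And>i. i < n \<Longrightarrow> u i = v i"
  shows "mpoly_eval n P u = mpoly_eval n P v"
  unfolding mpoly_eval_def using assms by (intro sum.cong refl) (auto intro!: prod.cong)

lemma prod_upd:
  fixes X :: "nat \<Rightarrow> complex"
  assumes "j < n"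
  shows "(\<Prod>i<n. (X(j:=y)) i ^ a i) = y ^ a j * (\<Prod>i\<in>{..<n}-{j}. X i ^ a i)"
proof -
  have "(\<Prod>i<n. (X(j:=y)) i ^ a i) = (X(j:=y)) j ^ a j * (\<Prod>i\<in>{..<n}-{j}. (X(j:=y)) i ^ a i)"
    using assms by (subst prod.remove[of _ j]) auto
  also have "(\<Prod>i\<in>{..<n}-{j}. (X(j:=y)) i ^ a i) = (\<Prod>i\<in>{..<n}-{j}. X i ^ a i)"
    by (intro prod.cong) auto
  finally show ?thesis by simp
qed

lemma eval_deriv:
  fixes X :: "nat \<Rightarrow> complex"
  assumes fin: "finite {\<alpha>. W \<alpha> \<noteq> 0}" and j: "j < n"
  shows "((\<lambda>y. mpoly_eval n W (X(j:=y))) has_field_derivative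
           mpoly_eval n (mpoly_pderiv j W) (X(j:=y0))) (at y0)"
proof -
  define S where "S = {\<alpha>. W \<alpha> \<noteq> 0}"
  define R where "R = (\<lambda>a::nat\<Rightarrow>nat. \<Prod>i\<in>{..<n}-{j}. X i ^ a i)"
  define g where "g = (\<lambda>b::nat\<Rightarrow>nat. b(j := b j + 1))"
  define T where "T = {b. W (g b) \<noteq> 0}"
  have ev: "mpoly_eval n W (X(j:=y)) = (\<Sum>a\<in>S. W a * (y ^ a j * R a))" for y
    unfolding mpoly_eval_def S_def R_def using prod_upd[OF j] by simp
  have d: "((\<lambda>y. \<Sum>a\<in>S. W a * (y ^ a j * R a)) has_field_derivative
     (\<Sum>a\<in>S. W a * (of_nat (a j) * y0 ^ (a j - 1) * R a))) (at y0)"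
    by (auto intro!: derivative_eq_intros sum.cong simp: mult_ac)
  have "(\<Sum>a\<in>S. W a * (of_nat (a j) * y0 ^ (a j - 1) * R a))
      = (\<Sum>a\<in>{a\<in>S. a j \<noteq> 0}. W a * (of_nat (a j) * y0 ^ (a j - 1) * R a))"
    using fin unfolding S_def by (intro sum.mono_neutral_right) auto
  also have "{a\<in>S. a j \<noteq> 0} = g ` T"
  proof
    show "{a\<in>S. a j \<noteq> 0} \<subseteq> g ` T"
    proof
      fix a assume a: "a \<in> {a\<in>S. a j \<noteq> 0}"
      have "g (a(j := a j - 1)) = a" using a by (auto simp: g_def)
      moreover have "a(j := a j - 1) \<in> T" using a \<open>g (a(j := a j - 1)) = a\<close> by (auto simp: T_def S_def)
      ultimately show "a \<in> g ` T" by (metis image_eqI)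
    qed
    show "g ` T \<subseteq> {a\<in>S. a j \<noteq> 0}" by (auto simp: g_def T_def S_def)
  qed
  also have "inj g" unfolding g_def inj_def by (metis fun_upd_eqD fun_upd_idem_iff fun_upd_upd add_right_cancel)
  then have "(\<Sum>a\<in>g ` T. W a * (of_nat (a j) * y0 ^ (a j - 1) * R a))
       = (\<Sum>b\<in>T. W (g b) * (of_nat (g b j) * y0 ^ (g b j - 1) * R (g b)))"
    by (subst sum.reindex) (auto intro: inj_on_subset)
  also have "\<dots> = mpoly_eval n (mpoly_pderiv j W) (X(j:=y0))"
  proof -
    have Rg: "R (g b) = R b" for b unfolding R_def g_def by (intro prod.cong) auto
    have "{\<alpha>. mpoly_pderiv j W \<alpha> \<noteq> 0} = T"
      unfolding mpoly_pderiv_def T_def g_def by (auto simp del: of_nat_Suc)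
    then show ?thesis
      unfolding mpoly_eval_def using prod_upd[OF j, of X y0]
      by (intro sum.cong) (auto simp: mpoly_pderiv_def g_def Rg[unfolded g_def] prod_upd[OF j] R_def)
  qed
  finally show ?thesis using d ev by simp
qed

lemma deriv_homog:
  fixes x :: "nat \<Rightarrow> complex" and t :: complex
  assumes fin: "finite {\<alpha>. W \<alpha> \<noteq> 0}" and j: "j < n" and t: "t \<noteq> 0"
    and hom: "\<forall>(t::complex) x. t \<noteq> 0 \<longrightarrow>
            mpoly_eval n W (\<lambda>i. t ^ k i * x i) = t ^ d * mpoly_eval n W x"
  shows "t ^ k j * mpoly_eval n (mpoly_pderiv j W) (\<lambda>i. t ^ k i * x i)
         = t ^ d * mpoly_eval n (mpoly_pderiv j W) x"
proof -
  define X where "X = (\<lambda>i. t ^ k i * x i)"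
  have eq: "(\<lambda>z. mpoly_eval n W (X(j := t ^ k j * z))) = (\<lambda>z. t ^ d * mpoly_eval n W (x(j:=z)))"
  proof
    fix z
    have e: "X(j := t ^ k j * z) = (\<lambda>i. t ^ k i * (x(j:=z)) i)" by (auto simp: X_def)
    have "mpoly_eval n W (\<lambda>i. t ^ k i * (x(j:=z)) i) = t ^ d * mpoly_eval n W (x(j:=z))"
      using hom t by blast
    then show "mpoly_eval n W (X(j := t ^ k j * z)) = t ^ d * mpoly_eval n W (x(j:=z))"
      by (simp only: e)
  qed
  have d1: "((\<lambda>z. mpoly_eval n W (X(j := t ^ k j * z))) has_field_derivative
      mpoly_eval n (mpoly_pderiv j W) (X(j := t ^ k j * x j)) * (t ^ k j)) (at (x j))"
  proof -
    have dg: "((\<lambda>z. t ^ k j * z) has_field_derivative t ^ k j) (at (x j))"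
      by (auto intro!: derivative_eq_intros)
    have df: "((\<lambda>y. mpoly_eval n W (X(j:=y))) has_field_derivative
           mpoly_eval n (mpoly_pderiv j W) (X(j := t ^ k j * x j))) (at ((\<lambda>z. t ^ k j * z) (x j)))"
      using eval_deriv[OF fin j, of X "t ^ k j * x j"] by simp
    show ?thesis using DERIV_chain2[OF df dg] by simp
  qed
  have d2: "((\<lambda>z. t ^ d * mpoly_eval n W (x(j:=z))) has_field_derivative
      t ^ d * mpoly_eval n (mpoly_pderiv j W) (x(j := x j))) (at (x j))"
    by (intro DERIV_cmult eval_deriv[OF fin j])
  have "X(j := t ^ k j * x j) = X" by (auto simp: X_def)
  with DERIV_unique[OF d1[unfolded eq] d2] show ?thesis by (simp add: X_def mult.commute)
qed

lemma cont_proj [continuous_intros]: "continuous_on S (\<lambda>x::nat \<Rightarrow> complex. x i)"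
  by (rule continuous_on_subset[OF continuous_on_product_coordinates]) simp

lemma cont_f: "continuous_on S (\<lambda>u. \<Sum>j<n. norm (mpoly_eval n (P j) u))"
  unfolding mpoly_eval_def by (intro continuous_intros)

definition Ksph :: "nat \<Rightarrow> (nat \<Rightarrow> complex) set" where
  "Ksph n = {v. (\<forall>i<n. norm (v i) \<le> 1) \<and> (\<forall>i\<ge>n. v i = 0) \<and> (\<exists>i<n. norm (v i) = 1)}"

lemma compact_Ksph: "compact (Ksph n)"
proof -
  define K0 where "K0 = PiE UNIV (\<lambda>i. if i < n then cball (0::complex) 1 else {0})"
  have "compactin (product_topology (\<lambda>i. euclidean) UNIV) K0"
    unfolding K0_def compactin_PiE by simp
  then have c0: "compact K0" by (simp add: euclidean_product_topology)
  have cl: "closed {v::nat\<Rightarrow>complex. norm (v i) = 1}" for i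
    by (intro closed_Collect_eq continuous_on_norm cont_proj continuous_on_const)
  have "Ksph n = (\<Union>i<n. K0 \<inter> {v. norm (v i) = 1})"
  proof (intro set_eqI iffI)
    fix v assume "v \<in> Ksph n"
    then show "v \<in> (\<Union>i<n. K0 \<inter> {v. norm (v i) = 1})"
      unfolding Ksph_def K0_def PiE_UNIV_domain by (auto simp: Pi_iff)
  next
    fix v assume "v \<in> (\<Union>i<n. K0 \<inter> {v. norm (v i) = 1})"
    then show "v \<in> Ksph n"
      unfolding Ksph_def K0_def PiE_UNIV_domain Pi_iff by (auto split: if_splits)
  qed
  moreover have "compact (\<Union>i<n. K0 \<inter> {v. norm (v i) = 1})"
    by (intro compact_UN finite_lessThan compact_Int_closed c0 cl)
  ultimately show ?thesis by simp
qed

lemma min_on_sphere: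
  fixes f :: "(nat \<Rightarrow> complex) \<Rightarrow> real"
  assumes "continuous_on UNIV f" and "\<And>v. v \<in> Ksph n \<Longrightarrow> f v > 0"
  shows "\<exists>c>0. \<forall>v\<in>Ksph n. c \<le> f v"
proof (cases "Ksph n = {}")
  case True then show ?thesis by (intro exI[of _ 1]) auto
next
  case False
  obtain x where "x \<in> Ksph n" "\<forall>y\<in>Ksph n. f x \<le> f y"
    using continuous_attains_inf[OF compact_Ksph False continuous_on_subset[OF assms(1)]] by blast
  then show ?thesis using assms(2) by blast
qed

theorem theorem5p8:
  fixes n :: nat and W :: "(nat \<Rightarrow> nat) \<Rightarrow> complex" and q \<delta> :: "nat \<Rightarrow> real"
  assumes "is_mpoly n W"
    and "qh_weights n W q"
    and "nondegenerate n W"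
    and "\<forall>i<n. q i < 1"
    and "\<delta> = (\<lambda>i. q i / Min ((\<lambda>j. 1 - q j) ` {..<n}))"
  shows "(\<exists>C::real. \<forall>u::nat \<Rightarrow> complex. \<forall>i<n.
            norm (u i) \<le> C * ((\<Sum>j<n. norm (mpoly_eval n (mpoly_pderiv j W) u)) + 1) powr \<delta> i)
         \<and> ((\<forall>i<n. q i \<le> 1/2) \<longrightarrow> (\<forall>i<n. \<delta> i \<le> 1))
         \<and> ((\<forall>i<n. q i < 1/2) \<longrightarrow> (\<forall>i<n. \<delta> i < 1))"
proof -
  from assms(2) obtain d k where d: "d > 0" and kpos: "\<forall>i<n. k i > 0"
    and qk: "\<forall>i<n. q i = real (k i) / real d"
    and hom: "\<forall>(t::complex) x. t \<noteq> 0 \<longrightarrow>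
            mpoly_eval n W (\<lambda>i. t ^ k i * x i) = t ^ d * mpoly_eval n W x"
    unfolding qh_weights_def by blast
  have fin: "finite {\<alpha>. W \<alpha> \<noteq> 0}" using assms(1) is_mpoly_def by blast
  have nd: "\<And>u. (\<forall>j<n. mpoly_eval n (mpoly_pderiv j W) u = 0) \<Longrightarrow> \<forall>i<n. u i = 0"
    using assms(3) nondegenerate_def by blast
  define \<mu> where "\<mu> = Min ((\<lambda>j. 1 - q j) ` {..<n})"
  have \<delta>: "\<And>i. \<delta> i = q i / \<mu>" using assms(5) \<mu>_def by simp
  have qpos: "\<And>i. i < n \<Longrightarrow> q i > 0" using qk kpos d by simp
  show ?thesis
  proof (cases "n = 0")
    case True then show ?thesis by simp
  next
    case False
    have \<mu>in: "\<mu> \<in> (\<lambda>j. 1 - q j) ` {..<n}" unfolding \<mu>_def using False by (intro Min_in) auto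
    have \<mu>le: "\<And>j. j < n \<Longrightarrow> \<mu> \<le> 1 - q j" unfolding \<mu>_def by (intro Min_le) auto
    have \<mu>pos: "\<mu> > 0" using \<mu>in assms(4) by auto
    have \<delta>nn: "\<And>i. i < n \<Longrightarrow> \<delta> i \<ge> 0" using \<delta> qpos \<mu>pos by (simp add: less_imp_le)
    have P2: "(\<forall>i<n. q i \<le> 1/2) \<longrightarrow> (\<forall>i<n. \<delta> i \<le> 1)"
    proof (intro impI allI)
      fix i assume h: "\<forall>i<n. q i \<le> 1/2" and i: "i < n"
      have "\<mu> \<ge> 1/2" using \<mu>in h by auto
      moreover have "q i \<le> 1/2" using h i by blast
      ultimately have "q i \<le> \<mu>" by linarith
      then show "\<delta> i \<le> 1" using \<mu>pos by (simp add: \<delta>)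
    qed
    have P3: "(\<forall>i<n. q i < 1/2) \<longrightarrow> (\<forall>i<n. \<delta> i < 1)"
    proof (intro impI allI)
      fix i assume h: "\<forall>i<n. q i < 1/2" and i: "i < n"
      have "\<mu> > 1/2" using \<mu>in h by auto
      moreover have "q i < 1/2" using h i by blast
      ultimately have "q i < \<mu>" by linarith
      then show "\<delta> i < 1" using \<mu>pos by (simp add: \<delta>)
    qed
    define f where "f = (\<lambda>u. \<Sum>j<n. norm (mpoly_eval n (mpoly_pderiv j W) u))"
    have "\<exists>c>0. \<forall>v\<in>Ksph n. c \<le> f v"
    proof (rule min_on_sphere)
      show "continuous_on UNIV f" unfolding f_def by (rule cont_f)
    next
      fix v assume v: "v \<in> Ksph n"
      show "f v > 0"
      proof (rule ccontr)
        assume "\<not> f v > 0"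
        then have "f v = 0" proof -
          have "f v \<ge> 0" unfolding f_def by (simp add: sum_nonneg)
          then show ?thesis using \<open>\<not> f v > 0\<close> by linarith
        qed
        then have "\<forall>j<n. mpoly_eval n (mpoly_pderiv j W) v = 0"
          unfolding f_def by (subst (asm) sum_nonneg_eq_0_iff) auto
        then have "\<forall>i<n. v i = 0" by (rule nd)
        then show False using v unfolding Ksph_def by auto
      qed
    qed
    then obtain c where c: "c > 0" "\<forall>v\<in>Ksph n. c \<le> f v" by blast
    define c' where "c' = min c 1"
    define D where "D = (\<Sum>i<n. \<delta> i)"
    define C where "C = (1/c') powr D"
    have c'pos: "c' > 0" and c'1: "c' \<le> 1" and c'f: "\<forall>v\<in>Ksph n. c' \<le> f v"
      using c unfolding c'_def by auto
    have inv1: "1 \<le> 1/c'" using c'pos c'1 by simp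
    have Dnn: "D \<ge> 0" unfolding D_def using \<delta>nn by (intro sum_nonneg) auto
    have C1: "1 \<le> C" unfolding C_def using inv1 Dnn by (rule ge_one_powr_ge_zero)
    have main: "\<forall>u. \<forall>i<n. norm (u i) \<le> C * (f u + 1) powr \<delta> i"
    proof (intro allI impI)
      fix u :: "nat \<Rightarrow> complex" and i assume i: "i < n"
      have fnn: "f u \<ge> 0" unfolding f_def by (simp add: sum_nonneg)
      show "norm (u i) \<le> C * (f u + 1) powr \<delta> i"
      proof (cases "\<forall>l<n. norm (u l) \<le> 1")
        case True
        have a: "norm (u i) \<le> 1" using True i by blast
        have "1 \<le> (f u + 1) powr \<delta> i" using fnn \<delta>nn[OF i] by (intro ge_one_powr_ge_zero) auto
        then have "1 * 1 \<le> C * (f u + 1) powr \<delta> i" using C1 by (intro mult_mono) auto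
        then show ?thesis using a by simp
      next
        case False
        then obtain l where l: "l < n" "norm (u l) > 1" by (auto simp: not_le)
        define \<rho> where "\<rho> = Max ((\<lambda>l. norm (u l) powr (1 / real (k l))) ` {..<n})"
        have \<rho>ge: "\<And>l. l < n \<Longrightarrow> norm (u l) powr (1 / real (k l)) \<le> \<rho>"
          unfolding \<rho>_def by (intro Max_ge) auto
        obtain l0 where l0: "l0 < n" "\<rho> = norm (u l0) powr (1 / real (k l0))"
        proof -
          have "\<rho> \<in> (\<lambda>l. norm (u l) powr (1 / real (k l))) ` {..<n}"
            unfolding \<rho>_def using False by (intro Max_in) auto
          then show ?thesis using that by auto
        qed
        have "1 < norm (u l) powr (1 / real (k l))"
        proof -
          have "1 powr (1 / real (k l)) < norm (u l) powr (1 / real (k l))"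
            using l kpos by (intro powr_less_mono2) auto
          then show ?thesis by simp
        qed
        then have \<rho>1: "\<rho> > 1" using \<rho>ge[OF l(1)] by linarith
        have rp: "\<And>l. l < n \<Longrightarrow> (norm (u l) powr (1 / real (k l))) powr real (k l) = norm (u l)"
        proof -
          fix l assume l: "l < n"
          have "(norm (u l) powr (1 / real (k l))) powr real (k l) = norm (u l) powr 1"
          proof -
            have "k l > 0" using kpos l by blast
            then show ?thesis unfolding powr_powr by simp
          qed
          then show "(norm (u l) powr (1 / real (k l))) powr real (k l) = norm (u l)" by simp
        qed
        have ule: "\<And>l. l < n \<Longrightarrow> norm (u l) \<le> \<rho> ^ k l"
        proof -
          fix l assume l: "l < n"
          have "norm (u l) = (norm (u l) powr (1 / real (k l))) powr real (k l)" using rp[OF l] by simp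
          also have "\<dots> \<le> \<rho> powr real (k l)" using \<rho>ge[OF l] by (intro powr_mono2) auto
          also have "\<dots> = \<rho> ^ k l" using \<rho>1 by (simp add: powr_realpow)
          finally show "norm (u l) \<le> \<rho> ^ k l" .
        qed
        have ueq: "norm (u l0) = \<rho> ^ k l0"
        proof -
          have "\<rho> ^ k l0 = \<rho> powr real (k l0)" using \<rho>1 by (simp add: powr_realpow)
          then show ?thesis using rp[OF l0(1)] l0(2) by simp
        qed
        define t where "t = complex_of_real \<rho>"
        define v where "v = (\<lambda>l. u l / t ^ k l)"
        have t0: "t \<noteq> 0" using \<rho>1 by (simp add: t_def)
        have uv: "u = (\<lambda>l. t ^ k l * v l)" using t0 by (auto simp: v_def)
        have nv: "\<And>l. norm (v l) = norm (u l) / \<rho> ^ k l"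
          using \<rho>1 by (simp add: v_def t_def norm_divide norm_power)
        define w where "w = (\<lambda>l. if l < n then v l else 0)"
        have wK: "w \<in> Ksph n"
          unfolding Ksph_def w_def
        proof (intro CollectI conjI allI impI)
          fix l assume "l < n"
          then show "norm (if l < n then v l else 0) \<le> 1"
            using ule[of l] \<rho>1 by (simp add: nv)
        next
          show "\<exists>l<n. norm (if l < n then v l else 0) = 1"
            using l0 ueq \<rho>1 by (intro exI[of _ l0]) (simp add: nv)
        qed auto
        have fwv: "f w = f v" unfolding f_def w_def
          by (intro sum.cong refl arg_cong[where f=norm] eval_local) auto
        have cfv: "c' \<le> f v" using c'f wK fwv by auto
        have Eu: "\<And>j. j < n \<Longrightarrow> norm (mpoly_eval n (mpoly_pderiv j W) u)
             = \<rho> ^ d / \<rho> ^ k j * norm (mpoly_eval n (mpoly_pderiv j W) v)"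
        proof -
          fix j assume j: "j < n"
          have "t ^ k j * mpoly_eval n (mpoly_pderiv j W) u = t ^ d * mpoly_eval n (mpoly_pderiv j W) v"
            using deriv_homog[OF fin j t0 hom, of v] uv by simp
          then have "mpoly_eval n (mpoly_pderiv j W) u = t ^ d / t ^ k j * mpoly_eval n (mpoly_pderiv j W) v"
            using t0 by (simp add: field_simps)
          then show "norm (mpoly_eval n (mpoly_pderiv j W) u)
             = \<rho> ^ d / \<rho> ^ k j * norm (mpoly_eval n (mpoly_pderiv j W) v)"
            using \<rho>1 by (simp add: t_def norm_mult norm_divide norm_power)
        qed
        have "\<rho> powr (real d * \<mu>) * f v \<le> f u"
        proof -
          have "\<rho> powr (real d * \<mu>) * f v = (\<Sum>j<n. \<rho> powr (real d * \<mu>) * norm (mpoly_eval n (mpoly_pderiv j W) v))"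
            unfolding f_def by (simp add: sum_distrib_left)
          also have "\<dots> \<le> (\<Sum>j<n. \<rho> ^ d / \<rho> ^ k j * norm (mpoly_eval n (mpoly_pderiv j W) v))"
          proof (intro sum_mono mult_right_mono)
            fix j assume "j \<in> {..<n}"
            then have j: "j < n" by simp
            have "real d * \<mu> \<le> real d * (1 - q j)" using \<mu>le[OF j] d by simp
            also have "\<dots> = real d - real (k j)" using qk j d by (simp add: field_simps)
            finally have le: "real d * \<mu> \<le> real d - real (k j)" .
            have "\<rho> powr (real d * \<mu>) \<le> \<rho> powr (real d - real (k j))"
              using le \<rho>1 by (intro powr_mono) auto
            also have "\<dots> = \<rho> ^ d / \<rho> ^ k j" using \<rho>1 by (simp add: powr_diff powr_realpow)
            finally show "\<rho> powr (real d * \<mu>) \<le> \<rho> ^ d / \<rho> ^ k j" .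
          qed auto
          also have "\<dots> = f u" unfolding f_def using Eu by simp
          finally show ?thesis .
        qed
        moreover have "\<rho> powr (real d * \<mu>) * c' \<le> \<rho> powr (real d * \<mu>) * f v"
          using cfv by (intro mult_left_mono) auto
        ultimately have P: "\<rho> powr (real d * \<mu>) \<le> f u / c'"
          using c'pos by (simp add: pos_le_divide_eq)
        have "norm (u i) \<le> \<rho> ^ k i" using ule[OF i] .
        also have "\<rho> ^ k i = (\<rho> powr (real d * \<mu>)) powr \<delta> i"
        proof -
          have "real d * \<mu> * \<delta> i = real (k i)" using \<delta> qk i d \<mu>pos by simp
          then show ?thesis using \<rho>1 by (simp add: powr_powr powr_realpow)
        qed
        also have "\<dots> \<le> (f u / c') powr \<delta> i"
          using P \<delta>nn[OF i] by (intro powr_mono2) auto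
        also have "\<dots> \<le> ((f u + 1) / c') powr \<delta> i"
          using \<delta>nn[OF i] fnn c'pos by (intro powr_mono2 divide_right_mono) auto
        also have "\<dots> = (1 / c') powr \<delta> i * (f u + 1) powr \<delta> i"
          by (simp add: powr_mult[symmetric])
        also have "\<dots> \<le> C * (f u + 1) powr \<delta> i"
        proof (intro mult_right_mono)
          have "\<delta> i \<le> D" unfolding D_def using i \<delta>nn by (intro member_le_sum) auto
          then show "(1 / c') powr \<delta> i \<le> C" unfolding C_def using inv1 by (rule powr_mono)
        qed auto
        finally show ?thesis .
      qed
    qed
    show ?thesis using main P2 P3 unfolding f_def by blast
  qed
qed

end
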